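(* In the setting below, let $(u^h)_{h>0}$ be a uniformly bounded family of real-valued maps on $[0,T]\times\mathbb R$ with half-relaxed limits $\overline u,\underline u$, and let $u^{n,h}=(u^h(\tau^n,x_0),\dots,u^h(\tau^n,x_M))^\top$ (grid depending on $h$). Then for every $(t,x)\in[0,T]\times\mathbb R$, $\mathcal M\underline u(t,x)\le\liminf(\mathcal M_nu^{n,h})_i\le\limsup(\mathcal M_nu^{n,h})_i\le\mathcal M\overline u(t,x)$, where $\liminf$ and $\limsup$ are taken as $h\to0$ and $(\tau^n,x_i)\to(t,x)$ over grid points of the $h$-grid.
   Context: Fix $T>0$, a metric space $Y$, nonempty compact sets $Z(t,x)\subseteq Y$ for $(t,x)\in[0,T]\times\mathbb R$, and continuous $\Gamma(t,x,z)\in\mathbb R$, $K(t,x,z)\in\mathbb R$. Intervention operator: $\mathcal MV(t,x)=\sup_{z\in Z(t,x)}\{V(t,\Gamma(t,x,z))+K(t,x,z)\}$. For each $h>0$: a time step $\Delta\tau=T/N$ and space step $\Delta x$ with $\Delta\tau,\Delta x\le Ch$ ($C$ independent of $h$), $M$ even with $M\Delta x\to\infty$ as $h\to0$, $\tau^n=T-n\Delta\tau$ ($0\le n\le N$), $x_i=(i-M/2)\Delta x$ ($0\le i\le M$); finite nonempty sets $Z^h(t,x)\subseteq Z(t,x)$ with $Z^h\to Z$ locally uniformly in the Hausdorff metric as $h\to0$ and $(t,x)\mapsto Z^h(t,x)$ Hausdorff-continuous. Linear interpolation of $U\in\mathbb R^{M+1}$: $\operatorname{interp}(U,y)=\alpha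 U_{k+1}+(1-\alpha)U_k$ if $x_k\le y<x_{k+1}$, $\alpha=(y-x_k)/(x_{k+1}-x_k)$; $U_0$ if $y\le x_0$; $U_M$ if $y\ge x_M$. Discretized intervention operator: $(\mathcal M_nU)_i=\sup_{z\in Z^h(\tau^n,x_i)}\{\operatorname{interp}(U,\Gamma(\tau^n,x_i,z))+K(\tau^n,x_i,z)\}$. Half-relaxed limits: $\overline u(t,x)=\limsup_{h\to0,(s,y)\to(t,x)}u^h(s,y)$, $\underline u(t,x)=\liminf_{h\to0,(s,y)\to(t,x)}u^h(s,y)$. *)

theory Defs
  imports "HOL-Analysis.Analysis" "HOL-Library.Extended_Real"
begin

definition hausdist :: "'a::metric_space set \<Rightarrow> 'a set \<Rightarrow> real" where
  "hausdist A B = max (SUP a\<in>A. infdist a B) (SUP b\<in>B. infdist b A)"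

definition interp :: "(nat \<Rightarrow> real) \<Rightarrow> nat \<Rightarrow> (nat \<Rightarrow> real) \<Rightarrow> real \<Rightarrow> real" where
  "interp xs M U y =
     (if y \<le> xs 0 then U 0
      else if y \<ge> xs M then U M
      else (let k = (THE k. k < M \<and> xs k \<le> y \<and> y < xs (Suc k));
                \<alpha> = (y - xs k) / (xs (Suc k) - xs k)
            in \<alpha> * U (Suc k) + (1 - \<alpha>) * U k))"

definition tgrid :: "real \<Rightarrow> nat \<Rightarrow> nat \<Rightarrow> real" where
  "tgrid T N n = T - real n * (T / real N)"

definition xgrid :: "nat \<Rightarrow> real \<Rightarrow> nat \<Rightarrow> real" where
  "xgrid M dx i = (real i - real M / 2) * dx"

definition interv ::
  "(real \<Rightarrow> real \<Rightarrow> 'y set) \<Rightarrow> (real \<Rightarrow> real \<Rightarrow> 'y \<Rightarrow> real) \<Rightarrow> (real \<Rightarrow> real \<Rightarrow> 'y \<Rightarrow> real)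
     \<Rightarrow> (real \<Rightarrow> real \<Rightarrow> ereal) \<Rightarrow> real \<Rightarrow> real \<Rightarrow> ereal" where
  "interv Z \<Gamma> K V t x = (SUP z\<in>Z t x. V t (\<Gamma> t x z) + ereal (K t x z))"

definition interv_disc ::
  "(real \<Rightarrow> real \<Rightarrow> 'y set) \<Rightarrow> (real \<Rightarrow> real \<Rightarrow> 'y \<Rightarrow> real) \<Rightarrow> (real \<Rightarrow> real \<Rightarrow> 'y \<Rightarrow> real)
     \<Rightarrow> real \<Rightarrow> nat \<Rightarrow> nat \<Rightarrow> real \<Rightarrow> nat \<Rightarrow> (nat \<Rightarrow> real) \<Rightarrow> nat \<Rightarrow> real" where
  "interv_disc Zh \<Gamma> K T N M dx n U i =
     (let t = tgrid T N n; x = xgrid M dx i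
      in Sup ((\<lambda>z. interp (xgrid M dx) M U (\<Gamma> t x z) + K t x z) ` Zh t x))"

definition hr_filter :: "real \<Rightarrow> real \<Rightarrow> real \<Rightarrow> (real \<times> (real \<times> real)) filter" where
  "hr_filter T t x = at_right 0 \<times>\<^sub>F (inf (nhds (t, x)) (principal ({0..T} \<times> UNIV)))"

definition upper_hr :: "real \<Rightarrow> (real \<Rightarrow> real \<Rightarrow> real \<Rightarrow> real) \<Rightarrow> real \<Rightarrow> real \<Rightarrow> ereal" where
  "upper_hr T u t x = Limsup (hr_filter T t x) (\<lambda>(h, s, y). ereal (u h s y))"

definition lower_hr :: "real \<Rightarrow> (real \<Rightarrow> real \<Rightarrow> real \<Rightarrow> real) \<Rightarrow> real \<Rightarrow> real \<Rightarrow> ereal" where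
  "lower_hr T u t x = Liminf (hr_filter T t x) (\<lambda>(h, s, y). ereal (u h s y))"

definition grid_filter :: "real \<Rightarrow> (real \<Rightarrow> nat) \<Rightarrow> (real \<Rightarrow> nat) \<Rightarrow> (real \<Rightarrow> real)
     \<Rightarrow> real \<Rightarrow> real \<Rightarrow> (real \<times> nat \<times> nat) filter" where
  "grid_filter T N M dx t x =
     inf (filtercomap (\<lambda>(h, n, i). (h, (tgrid T (N h) n, xgrid (M h) (dx h) i)))
            (at_right 0 \<times>\<^sub>F nhds (t, x)))
         (principal {(h, n, i). 0 < h \<and> n \<le> N h \<and> i \<le> M h})"

end

theory Submission
  imports Defs
begin


lemma haus_pt1:
  fixes A B :: "'a::metric_space set"
  assumes "a \<in> A" "B \<noteq> {}" "bounded A" "hausdist A B < e"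
  shows "\<exists>b\<in>B. dist a b < e"
proof -
  obtain b0 where b0: "b0 \<in> B" using assms(2) by auto
  obtain c r where cr: "\<forall>y\<in>A. dist c y \<le> r" using assms(3) unfolding bounded_def by auto
  have bdd: "bdd_above ((\<lambda>a. infdist a B) ` A)"
  proof (rule bdd_aboveI2)
    fix a' assume "a' \<in> A"
    have "infdist a' B \<le> dist a' b0" using b0 by (rule infdist_le)
    also have "\<dots> \<le> dist c a' + dist c b0" by (metis dist_commute dist_triangle)
    also have "\<dots> \<le> r + dist c b0" using cr \<open>a' \<in> A\<close> by auto
    finally show "infdist a' B \<le> r + dist c b0" .
  qed
  have "infdist a B \<le> (SUP a\<in>A. infdist a B)" using bdd assms(1) by (rule cSUP_upper2) simp
  also have "\<dots> \<le> hausdist A B" unfolding hausdist_def by simp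
  finally have "infdist a B < e" using assms(4) by simp
  then have "(INF b\<in>B. dist a b) < e" using assms(2) by (simp add: infdist_notempty)
  then show ?thesis using assms(2) by (subst (asm) cINF_less_iff) (auto intro: bdd_belowI2[where m=0])
qed

lemma haus_pt2:
  fixes A B :: "'a::metric_space set"
  assumes "b \<in> B" "A \<noteq> {}" "bounded B" "hausdist A B < e"
  shows "\<exists>a\<in>A. dist b a < e"
proof -
  have "hausdist B A < e" using assms(4) unfolding hausdist_def by (simp add: max.commute)
  then show ?thesis using haus_pt1[OF assms(1-3)] by blast
qed

lemma xgrid_Suc: "xgrid M dx (Suc k) = xgrid M dx k + dx"
  unfolding xgrid_def by (simp add: algebra_simps)

lemma xgrid_mono: "0 < dx \<Longrightarrow> i < j \<Longrightarrow> xgrid M dx i < xgrid M dx j"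
  unfolding xgrid_def by simp

lemma xgrid_idx:
  assumes "0 < dx" "\<bar>y\<bar> < real M * dx / 2"
  shows "\<exists>k<M. xgrid M dx k \<le> y \<and> y < xgrid M dx (Suc k)"
proof -
  define r where "r = y / dx + real M / 2"
  have r0: "0 < r" and rM: "r < real M"
    using assms by (auto simp: r_def field_simps abs_less_iff)
  define k where "k = nat \<lfloor>r\<rfloor>"
  have k1: "real k \<le> r" "r < real k + 1" using r0 by (auto simp: k_def)
  have "k < M" using k1 rM by linarith
  moreover have "xgrid M dx k \<le> y"
  proof -
    have "(real k - real M / 2) \<le> y / dx" using k1 by (simp add: r_def)
    then show ?thesis unfolding xgrid_def using assms(1) by (simp add: field_simps)
  qed
  moreover have "y < xgrid M dx (Suc k)"
  proof -
    have "y / dx < (real (Suc k) - real M / 2)" using k1 by (simp add: r_def)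
    then show ?thesis unfolding xgrid_def using assms(1) by (simp add: field_simps)
  qed
  ultimately show ?thesis by blast
qed

lemma interp_bounds:
  fixes U :: "nat \<Rightarrow> real"
  assumes dx: "0 < dx" and y: "\<bar>y\<bar> < real M * dx / 2"
  shows "(\<exists>j\<le>M. \<bar>xgrid M dx j - y\<bar> \<le> dx \<and> interp (xgrid M dx) M U y \<le> U j)
       \<and> (\<exists>j\<le>M. \<bar>xgrid M dx j - y\<bar> \<le> dx \<and> U j \<le> interp (xgrid M dx) M U y)"
proof -
  obtain k where k: "k < M" "xgrid M dx k \<le> y" "y < xgrid M dx (Suc k)"
    using xgrid_idx[OF assms] by blast
  have x0: "xgrid M dx 0 < y" using y dx by (auto simp: xgrid_def abs_less_iff)
  have xM: "y < xgrid M dx M" using y dx by (auto simp: xgrid_def abs_less_iff)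
  have the: "(THE k. k < M \<and> xgrid M dx k \<le> y \<and> y < xgrid M dx (Suc k)) = k"
  proof (rule the_equality)
    show "k < M \<and> xgrid M dx k \<le> y \<and> y < xgrid M dx (Suc k)" using k by auto
  next
    fix k' assume k': "k' < M \<and> xgrid M dx k' \<le> y \<and> y < xgrid M dx (Suc k')"
    have "\<not> k' < k"
    proof
      assume "k' < k" then have "Suc k' \<le> k" by simp
      then have "xgrid M dx (Suc k') \<le> xgrid M dx k"
        using xgrid_mono[OF dx, of "Suc k'" k M] by (cases "Suc k' = k") auto
      then show False using k k' by auto
    qed
    moreover have "\<not> k < k'"
    proof
      assume "k < k'" then have "Suc k \<le> k'" by simp
      then have "xgrid M dx (Suc k) \<le> xgrid M dx k'"
        using xgrid_mono[OF dx, of "Suc k" k' M] by (cases "Suc k = k'") auto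
      then show False using k k' by auto
    qed
    ultimately show "k' = k" by simp
  qed
  define a where "a = (y - xgrid M dx k) / (xgrid M dx (Suc k) - xgrid M dx k)"
  have a01: "0 \<le> a" "a \<le> 1" using k dx by (auto simp: a_def xgrid_Suc field_simps)
  have iv: "interp (xgrid M dx) M U y = a * U (Suc k) + (1 - a) * U k"
    using x0 xM by (simp add: interp_def the a_def Let_def)
  have d1: "\<bar>xgrid M dx k - y\<bar> \<le> dx" "\<bar>xgrid M dx (Suc k) - y\<bar> \<le> dx"
    using k by (auto simp: xgrid_Suc)
  have lo: "min (U k) (U (Suc k)) \<le> a * U (Suc k) + (1 - a) * U k"
  proof -
    have "a * min (U k) (U (Suc k)) \<le> a * U (Suc k)" using a01 by (intro mult_left_mono) auto
    moreover have "(1-a) * min (U k) (U (Suc k)) \<le> (1-a) * U k" using a01 by (intro mult_left_mono) auto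
    ultimately show ?thesis by (simp add: algebra_simps)
  qed
  have hi: "a * U (Suc k) + (1 - a) * U k \<le> max (U k) (U (Suc k))"
  proof -
    have "a * U (Suc k) \<le> a * max (U k) (U (Suc k))" using a01 by (intro mult_left_mono) auto
    moreover have "(1-a) * U k \<le> (1-a) * max (U k) (U (Suc k))" using a01 by (intro mult_left_mono) auto
    ultimately show ?thesis by (simp add: algebra_simps)
  qed
  show ?thesis
  proof
    show "\<exists>j\<le>M. \<bar>xgrid M dx j - y\<bar> \<le> dx \<and> interp (xgrid M dx) M U y \<le> U j"
    proof (cases "U k \<le> U (Suc k)")
      case True then show ?thesis using hi iv d1 k by (intro exI[of _ "Suc k"]) auto
    next
      case False then show ?thesis using hi iv d1 k by (intro exI[of _ k]) auto
    qed
    show "\<exists>j\<le>M. \<bar>xgrid M dx j - y\<bar> \<le> dx \<and> U j \<le> interp (xgrid M dx) M U y"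
    proof (cases "U k \<le> U (Suc k)")
      case True then show ?thesis using lo iv d1 k by (intro exI[of _ k]) auto
    next
      case False then show ?thesis using lo iv d1 k by (intro exI[of _ "Suc k"]) auto
    qed
  qed
qed

lemma tgrid_range: "0 < T \<Longrightarrow> n \<le> N \<Longrightarrow> 0 < N \<Longrightarrow> tgrid T N n \<in> {0..T}"
  unfolding tgrid_def
  by (auto simp: field_simps)

lemma tgrid_idx:
  assumes "0 < T" "0 < N" "t \<in> {0..T}"
  shows "\<exists>n\<le>N. \<bar>tgrid T N n - t\<bar> \<le> T / real N"
proof -
  define r where "r = (T - t) / (T / real N)"
  have r0: "0 \<le> r" and rN: "r \<le> real N" using assms by (auto simp: r_def field_simps)
  define n where "n = nat \<lfloor>r\<rfloor>"
  have n1: "real n \<le> r" "r < real n + 1" using r0 by (auto simp: n_def)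
  have "n \<le> N" using n1 rN by linarith
  moreover have "\<bar>tgrid T N n - t\<bar> \<le> T / real N"
  proof -
    have "real n * (T / real N) \<le> T - t" "T - t < (real n + 1) * (T / real N)"
      using n1 assms by (auto simp: r_def field_simps)
    moreover have "(real n + 1) * (T / real N) = real n * (T / real N) + T / real N" by (simp add: distrib_right add_divide_distrib)
    ultimately show ?thesis unfolding tgrid_def by (auto simp: abs_le_iff)
  qed
  ultimately show ?thesis by blast
qed

lemma dist_pair_le: "dist (a, b) (c, d) \<le> dist a c + dist b d"
proof -
  have "dist (a,b) (c,d) \<le> dist (a,b) (c,b) + dist (c,b) (c,d)" by (rule dist_triangle)
  also have "\<dots> = dist a c + dist b d" by (simp add: dist_Pair_Pair)
  finally show ?thesis .
qed



lemma compact_ev: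
  fixes S :: "'a::metric_space set"
  assumes cS: "compact S"
    and loc: "\<And>z. z \<in> S \<Longrightarrow> \<exists>r>0. eventually (\<lambda>w. \<forall>z'. dist z' z < r \<longrightarrow> P w z') F"
  shows "\<exists>e>0. eventually (\<lambda>w. \<forall>z'. (\<exists>z\<in>S. dist z' z < e) \<longrightarrow> P w z') F"
proof -
  from loc obtain R where R: "\<And>z. z \<in> S \<Longrightarrow> R z > 0 \<and> eventually (\<lambda>w. \<forall>z'. dist z' z < R z \<longrightarrow> P w z') F"
    by metis
  have cov: "S \<subseteq> (\<Union>z\<in>S. ball z (R z / 2))" using R by force
  obtain D where D: "D \<subseteq> S" "finite D" "S \<subseteq> (\<Union>z\<in>D. ball z (R z / 2))"
    using compactE_image[OF cS _ cov] by blast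
  define e where "e = (if D = {} then 1 else Min ((\<lambda>z. R z / 2) ` D))"
  have e0: "e > 0"
  proof (cases "D = {}")
    case False
    have "\<forall>a\<in>(\<lambda>z. R z / 2) ` D. 0 < a" using D(1) R by auto
    then show ?thesis using False D(2) unfolding e_def by (simp add: Min_gr_iff)
  qed (simp add: e_def)
  have eD: "\<And>d. d \<in> D \<Longrightarrow> e \<le> R d / 2"
  proof -
    fix d assume "d \<in> D"
    then have "D \<noteq> {}" by auto
    then show "e \<le> R d / 2" using D(2) \<open>d \<in> D\<close> unfolding e_def using Min_le[of "(\<lambda>z. R z / 2) ` D" "R d / 2"] by simp
  qed
  have ev: "eventually (\<lambda>w. \<forall>d\<in>D. \<forall>z'. dist z' d < R d \<longrightarrow> P w z') F"
    using D R by (intro eventually_ball_finite) auto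
  show ?thesis
  proof (rule exI[of _ e], intro conjI e0)
    show "eventually (\<lambda>w. \<forall>z'. (\<exists>z\<in>S. dist z' z < e) \<longrightarrow> P w z') F"
    proof (rule eventually_mono[OF ev], intro allI impI)
      fix w z' assume H: "\<forall>d\<in>D. \<forall>z'. dist z' d < R d \<longrightarrow> P w z'" and "\<exists>z\<in>S. dist z' z < e"
      then obtain z where z: "z \<in> S" "dist z' z < e" by blast
      then obtain d where d: "d \<in> D" "dist d z < R d / 2" using D(3) by (auto simp: dist_commute)
      have "dist z' d \<le> dist z' z + dist d z" by (metis dist_commute dist_triangle)
      also have "\<dots> < R d" using z d eD[OF d(1)] by linarith
      finally show "P w z'" using H d by blast
    qed
  qed
qed

lemma hr_ev:
  assumes "eventually P (hr_filter T t x)"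
  shows "\<exists>h0>0. \<exists>\<rho>>0. \<forall>h s y. 0 < h \<longrightarrow> h < h0 \<longrightarrow> s \<in> {0..T} \<longrightarrow> dist (s, y) (t, x) < \<rho> \<longrightarrow> P (h, s, y)"
proof -
  obtain Pf Pg where P: "eventually Pf (at_right (0::real))" "eventually Pg (inf (nhds (t, x)) (principal ({0..T} \<times> UNIV)))"
    "\<forall>a b. Pf a \<longrightarrow> Pg b \<longrightarrow> P (a, b)"
    using assms unfolding hr_filter_def eventually_prod_filter by blast
  obtain h0 where h0: "h0 > 0" "\<forall>h>0. h < h0 \<longrightarrow> Pf h" using P(1) unfolding eventually_at_right_field by auto
  have "eventually (\<lambda>p. p \<in> {0..T} \<times> UNIV \<longrightarrow> Pg p) (nhds (t, x))"
    using P(2) by (simp add: eventually_inf_principal)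
  then obtain \<rho> where \<rho>: "\<rho> > 0" "\<forall>p. dist p (t, x) < \<rho> \<longrightarrow> p \<in> {0..T} \<times> UNIV \<longrightarrow> Pg p"
    unfolding eventually_nhds_metric by auto
  show ?thesis using h0 \<rho> P(3) by (intro exI[of _ h0] conjI exI[of _ \<rho>]) auto
qed

lemma G_ev:
  assumes "eventually Q (at_right (0::real))" "\<rho> > 0"
  shows "eventually (\<lambda>(h, n, i). Q h \<and> 0 < h \<and> n \<le> N h \<and> i \<le> M h \<and>
            dist (tgrid T (N h) n, xgrid (M h) (dx h) i) (t, x) < \<rho>) (grid_filter T N M dx t x)"
proof -
  have n1: "eventually (\<lambda>p. dist p (t, x) < \<rho>) (nhds (t, x))"
    unfolding eventually_nhds_metric using assms(2) by blast
  have e1: "eventually (\<lambda>(h, p). Q h \<and> dist p (t, x) < \<rho>) (at_right 0 \<times>\<^sub>F nhds (t, x))"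
    using eventually_prodI[OF assms(1) n1] unfolding case_prod_unfold by simp
  show ?thesis
    unfolding grid_filter_def eventually_inf_principal eventually_filtercomap
    by (rule exI[of _ "\<lambda>(h, p). Q h \<and> dist p (t, x) < \<rho>"], intro conjI e1) auto
qed



lemma dist_pair_comp: "dist a c \<le> dist (a, b) (c, d)" "dist b d \<le> dist (a, b) (c, d)"
  using dist_fst_le[of "(a,b)" "(c,d)"] dist_snd_le[of "(a,b)" "(c,d)"] by auto

lemma G_nontriv:
  fixes T C :: real and N M :: "real \<Rightarrow> nat" and dx :: "real \<Rightarrow> real"
  assumes T_pos: "T > 0"
    and N_pos: "\<And>h. h > 0 \<Longrightarrow> N h > 0"
    and dx_pos: "\<And>h. h > 0 \<Longrightarrow> dx h > 0"
    and dt_le: "\<And>h. h > 0 \<Longrightarrow> T / real (N h) \<le> C * h"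
    and dx_le: "\<And>h. h > 0 \<Longrightarrow> dx h \<le> C * h"
    and M_dx: "filterlim (\<lambda>h. real (M h) * dx h) at_top (at_right 0)"
    and tx: "t \<in> {0..T}"
  shows "grid_filter T N M dx t x \<noteq> bot"
proof
  assume "grid_filter T N M dx t x = bot"
  then have "eventually (\<lambda>_. False) (grid_filter T N M dx t x)" by simp
  then obtain Q where Q: "eventually Q (at_right 0 \<times>\<^sub>F nhds (t, x))"
    "\<And>w. Q ((\<lambda>(h, n, i). (h, (tgrid T (N h) n, xgrid (M h) (dx h) i))) w) \<Longrightarrow>
         w \<in> {(h, n, i). 0 < h \<and> n \<le> N h \<and> i \<le> M h} \<Longrightarrow> False"
    unfolding grid_filter_def eventually_inf_principal eventually_filtercomap by blast
  obtain Pf Pg where P: "eventually Pf (at_right (0::real))" "eventually Pg (nhds (t, x))"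
    "\<And>a b. Pf a \<Longrightarrow> Pg b \<Longrightarrow> Q (a, b)"
    using Q(1) unfolding eventually_prod_filter by blast
  obtain \<rho> where \<rho>: "\<rho> > 0" "\<And>p. dist p (t, x) < \<rho> \<Longrightarrow> Pg p"
    using P(2) unfolding eventually_nhds_metric by auto
  have C0: "C > 0"
  proof -
    have "0 < T / real (N 1)" using T_pos N_pos[of 1] by simp
    also have "\<dots> \<le> C * 1" using dt_le[of 1] by simp
    finally show ?thesis by simp
  qed
  have e1: "eventually (\<lambda>h. C * h < \<rho> / 2 \<and> 0 < h) (at_right (0::real))"
    unfolding eventually_at_right_field
    by (rule exI[of _ "\<rho> / (2 * C)"]) (use C0 \<rho> in \<open>auto simp: field_simps\<close>)
  have e2: "eventually (\<lambda>h. 2 * \<bar>x\<bar> + 1 \<le> real (M h) * dx h) (at_right (0::real))"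
    using M_dx unfolding filterlim_at_top by blast
  obtain h where h: "Pf h" "C * h < \<rho> / 2" "0 < h" "2 * \<bar>x\<bar> + 1 \<le> real (M h) * dx h"
    using eventually_happens'[OF trivial_limit_at_right_real eventually_conj[OF P(1) eventually_conj[OF e1 e2]]]
    by blast
  obtain n where n: "n \<le> N h" "\<bar>tgrid T (N h) n - t\<bar> \<le> T / real (N h)"
    using tgrid_idx[OF T_pos N_pos[OF h(3)] tx] by blast
  have "\<bar>x\<bar> < real (M h) * dx h / 2" using h(4) by linarith
  then obtain k where k: "k < M h" "xgrid (M h) (dx h) k \<le> x" "x < xgrid (M h) (dx h) (Suc k)"
    using xgrid_idx[OF dx_pos[OF h(3)]] by blast
  have "dist (tgrid T (N h) n, xgrid (M h) (dx h) k) (t, x) \<le> dist (tgrid T (N h) n) t + dist (xgrid (M h) (dx h) k) x"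
    by (rule dist_pair_le)
  also have "\<dots> < \<rho>"
  proof -
    have "dist (tgrid T (N h) n) t \<le> C * h" using n(2) dt_le[OF h(3)] by (simp add: dist_real_def)
    moreover have "dist (xgrid (M h) (dx h) k) x \<le> C * h"
      using k xgrid_Suc[of "M h" "dx h" k] dx_le[OF h(3)] by (simp add: dist_real_def)
    ultimately show ?thesis using h(2) by linarith
  qed
  finally have "Pg (tgrid T (N h) n, xgrid (M h) (dx h) k)" by (rule \<rho>(2))
  then have "Q (h, (tgrid T (N h) n, xgrid (M h) (dx h) k))" using P(3) h(1) by blast
  then show False using Q(2)[of "(h, n, k)"] n k h(3) by auto
qed

lemma H12:
  fixes T :: real
    and Z :: "real \<Rightarrow> real \<Rightarrow> 'y::metric_space set"
    and Zh :: "real \<Rightarrow> real \<Rightarrow> real \<Rightarrow> 'y set"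
  assumes Z_ne: "\<And>t x. t \<in> {0..T} \<Longrightarrow> Z t x \<noteq> {}"
    and Z_compact: "\<And>t x. t \<in> {0..T} \<Longrightarrow> compact (Z t x)"
    and Zh_fin: "\<And>h t x. h > 0 \<Longrightarrow> t \<in> {0..T} \<Longrightarrow> finite (Zh h t x)"
    and Zh_ne: "\<And>h t x. h > 0 \<Longrightarrow> t \<in> {0..T} \<Longrightarrow> Zh h t x \<noteq> {}"
    and Zh_sub: "\<And>h t x. h > 0 \<Longrightarrow> t \<in> {0..T} \<Longrightarrow> Zh h t x \<subseteq> Z t x"
    and Zh_conv: "\<And>S e. compact S \<Longrightarrow> S \<subseteq> {0..T} \<times> UNIV \<Longrightarrow> e > 0 \<Longrightarrow>
        eventually (\<lambda>h. \<forall>(s, y)\<in>S. hausdist (Zh h s y) (Z s y) < e) (at_right 0)"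
    and Zh_cont: "\<And>h s y e. h > 0 \<Longrightarrow> s \<in> {0..T} \<Longrightarrow> e > 0 \<Longrightarrow>
        \<exists>d>0. \<forall>s'\<in>{0..T}. \<forall>y'. dist (s', y') (s, y) < d \<longrightarrow>
                hausdist (Zh h s' y') (Zh h s y) < e"
    and tx: "t \<in> {0..T}"
    and e: "e > 0"
  shows "\<exists>Q d. eventually Q (at_right 0) \<and> d > 0 \<and>
    (\<forall>h s y. Q h \<longrightarrow> 0 < h \<longrightarrow> s \<in> {0..T} \<longrightarrow> dist (s, y) (t, x) < d \<longrightarrow>
       (\<forall>z'\<in>Zh h s y. \<exists>w\<in>Z t x. dist z' w < e) \<and> (\<forall>z\<in>Z t x. \<exists>z'\<in>Zh h s y. dist z' z < e))"
proof -
  define S where "S = {0..T} \<times> cball x 1"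
  have cS: "compact S" unfolding S_def by (intro compact_Times compact_Icc compact_cball)
  have SS: "S \<subseteq> {0..T} \<times> UNIV" unfolding S_def by auto
  define Q where "Q = (\<lambda>h. \<forall>(s, y)\<in>S. hausdist (Zh h s y) (Z s y) < e / 4)"
  have evQ: "eventually Q (at_right 0)" unfolding Q_def using Zh_conv[OF cS SS, of "e / 4"] e by simp
  obtain h1 where h1: "Q h1" "h1 > 0"
    using eventually_happens'[OF trivial_limit_at_right_real eventually_conj[OF evQ eventually_at_right_less]]
    by blast
  obtain d0 where d0: "d0 > 0" "\<forall>s'\<in>{0..T}. \<forall>y'. dist (s', y') (t, x) < d0 \<longrightarrow>
                hausdist (Zh h1 s' y') (Zh h1 t x) < e / 4"
    using Zh_cont[OF h1(2) tx, of "e/4" x] e by auto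
  have txS: "(t, x) \<in> S" using tx by (auto simp: S_def)
  have main: "(\<forall>z'\<in>Zh h s y. \<exists>w\<in>Z t x. dist z' w < e) \<and> (\<forall>z\<in>Z t x. \<exists>z'\<in>Zh h s y. dist z' z < e)"
    if Qh: "Q h" and h: "0 < h" and s: "s \<in> {0..T}" and d: "dist (s, y) (t, x) < min d0 1" for h s y
  proof -
    have "dist y x < 1" using d dist_pair_comp(2)[where a=s and b=y and c=t and d=x] by linarith
    then have syS: "(s, y) \<in> S" using s by (auto simp: S_def dist_commute)
    have hs1: "hausdist (Zh h1 s y) (Zh h1 t x) < e / 4" using d0(2) s d by auto
    have hs2: "hausdist (Zh h1 s y) (Z s y) < e / 4" using h1(1) syS unfolding Q_def by auto
    have hs3: "hausdist (Zh h1 t x) (Z t x) < e / 4" using h1(1) txS unfolding Q_def by auto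
    have hs4: "hausdist (Zh h s y) (Z s y) < e / 4" using Qh syS unfolding Q_def by auto
    have bZ: "\<And>a b. a \<in> {0..T} \<Longrightarrow> bounded (Z a b)" using Z_compact compact_imp_bounded by blast
    have bZh: "\<And>h a b. h > 0 \<Longrightarrow> a \<in> {0..T} \<Longrightarrow> bounded (Zh h a b)" using Zh_fin finite_imp_bounded by blast
    show "(\<forall>z'\<in>Zh h s y. \<exists>w\<in>Z t x. dist z' w < e) \<and> (\<forall>z\<in>Z t x. \<exists>z'\<in>Zh h s y. dist z' z < e)"
    proof (intro conjI ballI)
      fix z' assume z': "z' \<in> Zh h s y"
      then have "z' \<in> Z s y" using Zh_sub[OF h s] by auto
      then obtain z2 where z2: "z2 \<in> Zh h1 s y" "dist z' z2 < e / 4"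
        using haus_pt2[OF _ Zh_ne[OF h1(2) s] bZ[OF s] hs2] by blast
      obtain z1 where z1: "z1 \<in> Zh h1 t x" "dist z2 z1 < e / 4"
        using haus_pt1[OF z2(1) Zh_ne[OF h1(2) tx] bZh[OF h1(2) s] hs1] by blast
      obtain w where w: "w \<in> Z t x" "dist z1 w < e / 4"
        using haus_pt1[OF z1(1) Z_ne[OF tx] bZh[OF h1(2) tx] hs3] by blast
      have "dist z' w \<le> dist z' z2 + dist z2 z1 + dist z1 w"
        by (metis add_mono_thms_linordered_semiring(3) dist_triangle order.trans)
      then show "\<exists>w\<in>Z t x. dist z' w < e" using z2 z1 w e by (intro bexI[OF _ w(1)]) linarith
    next
      fix z assume z: "z \<in> Z t x"
      obtain z1 where z1: "z1 \<in> Zh h1 t x" "dist z z1 < e / 4"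
        using haus_pt2[OF z Zh_ne[OF h1(2) tx] bZ[OF tx] hs3] by blast
      obtain z2 where z2: "z2 \<in> Zh h1 s y" "dist z1 z2 < e / 4"
        using haus_pt2[OF z1(1) Zh_ne[OF h1(2) s] bZh[OF h1(2) tx] hs1] by blast
      obtain z3 where z3: "z3 \<in> Z s y" "dist z2 z3 < e / 4"
        using haus_pt1[OF z2(1) Z_ne[OF s] bZh[OF h1(2) s] hs2] by blast
      obtain z4 where z4: "z4 \<in> Zh h s y" "dist z3 z4 < e / 4"
        using haus_pt2[OF z3(1) Zh_ne[OF h s] bZ[OF s] hs4] by blast
      have "dist z4 z \<le> dist z z1 + dist z1 z2 + dist z2 z3 + dist z3 z4"
        by (smt (verit) dist_commute dist_triangle)
      then show "\<exists>z'\<in>Zh h s y. dist z' z < e" using z1 z2 z3 z4 e by (intro bexI[OF _ z4(1)]) linarith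
    qed
  qed
  show ?thesis using evQ d0 main by (intro exI[of _ Q] exI[of _ "min d0 1"]) auto
qed



theorem lemma4p9:
  fixes T C :: real
    and Z :: "real \<Rightarrow> real \<Rightarrow> 'y::metric_space set"
    and \<Gamma> K :: "real \<Rightarrow> real \<Rightarrow> 'y \<Rightarrow> real"
    and N M :: "real \<Rightarrow> nat" and dx :: "real \<Rightarrow> real"
    and Zh :: "real \<Rightarrow> real \<Rightarrow> real \<Rightarrow> 'y set"
    and u :: "real \<Rightarrow> real \<Rightarrow> real \<Rightarrow> real"
    and t x :: real
  assumes T_pos: "T > 0"
    and Z_ne: "\<And>t x. t \<in> {0..T} \<Longrightarrow> Z t x \<noteq> {}"
    and Z_compact: "\<And>t x. t \<in> {0..T} \<Longrightarrow> compact (Z t x)"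
    and \<Gamma>_cont: "continuous_on ({0..T} \<times> UNIV \<times> UNIV) (\<lambda>(t, x, z). \<Gamma> t x z)"
    and K_cont: "continuous_on ({0..T} \<times> UNIV \<times> UNIV) (\<lambda>(t, x, z). K t x z)"
    and N_pos: "\<And>h. h > 0 \<Longrightarrow> N h > 0"
    and dx_pos: "\<And>h. h > 0 \<Longrightarrow> dx h > 0"
    and dt_le: "\<And>h. h > 0 \<Longrightarrow> T / real (N h) \<le> C * h"
    and dx_le: "\<And>h. h > 0 \<Longrightarrow> dx h \<le> C * h"
    and M_even: "\<And>h. h > 0 \<Longrightarrow> even (M h)"
    and M_dx: "filterlim (\<lambda>h. real (M h) * dx h) at_top (at_right 0)"
    and Zh_fin: "\<And>h t x. h > 0 \<Longrightarrow> t \<in> {0..T} \<Longrightarrow> finite (Zh h t x)"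
    and Zh_ne: "\<And>h t x. h > 0 \<Longrightarrow> t \<in> {0..T} \<Longrightarrow> Zh h t x \<noteq> {}"
    and Zh_sub: "\<And>h t x. h > 0 \<Longrightarrow> t \<in> {0..T} \<Longrightarrow> Zh h t x \<subseteq> Z t x"
    and Zh_conv: "\<And>S e. compact S \<Longrightarrow> S \<subseteq> {0..T} \<times> UNIV \<Longrightarrow> e > 0 \<Longrightarrow>
        eventually (\<lambda>h. \<forall>(s, y)\<in>S. hausdist (Zh h s y) (Z s y) < e) (at_right 0)"
    and Zh_cont: "\<And>h s y e. h > 0 \<Longrightarrow> s \<in> {0..T} \<Longrightarrow> e > 0 \<Longrightarrow>
        \<exists>d>0. \<forall>s'\<in>{0..T}. \<forall>y'. dist (s', y') (s, y) < d \<longrightarrow>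
                hausdist (Zh h s' y') (Zh h s y) < e"
    and u_bdd: "\<exists>B. \<forall>h>0. \<forall>s\<in>{0..T}. \<forall>y. \<bar>u h s y\<bar> \<le> B"
    and tx: "t \<in> {0..T}"
  shows "interv Z \<Gamma> K (lower_hr T u) t x
           \<le> Liminf (grid_filter T N M dx t x)
               (\<lambda>(h, n, i). ereal (interv_disc (Zh h) \<Gamma> K T (N h) (M h) (dx h) n
                  (\<lambda>j. u h (tgrid T (N h) n) (xgrid (M h) (dx h) j)) i))
       \<and> Liminf (grid_filter T N M dx t x)
               (\<lambda>(h, n, i). ereal (interv_disc (Zh h) \<Gamma> K T (N h) (M h) (dx h) n
                  (\<lambda>j. u h (tgrid T (N h) n) (xgrid (M h) (dx h) j)) i))
         \<le> Limsup (grid_filter T N M dx t x)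
               (\<lambda>(h, n, i). ereal (interv_disc (Zh h) \<Gamma> K T (N h) (M h) (dx h) n
                  (\<lambda>j. u h (tgrid T (N h) n) (xgrid (M h) (dx h) j)) i))
       \<and> Limsup (grid_filter T N M dx t x)
               (\<lambda>(h, n, i). ereal (interv_disc (Zh h) \<Gamma> K T (N h) (M h) (dx h) n
                  (\<lambda>j. u h (tgrid T (N h) n) (xgrid (M h) (dx h) j)) i))
         \<le> interv Z \<Gamma> K (upper_hr T u) t x"
proof -
  define G where "G = grid_filter T N M dx t x"
  define sg where "sg h n = tgrid T (N h) n" for h n
  define yg where "yg h i = xgrid (M h) (dx h) i" for h i
  define UU where "UU h n = (\<lambda>j. u h (sg h n) (xgrid (M h) (dx h) j))" for h n
  define val where "val h n i z = interp (xgrid (M h) (dx h)) (M h) (UU h n) (\<Gamma> (sg h n) (yg h i) z)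
      + K (sg h n) (yg h i) z" for h n i z
  define f where "f = (\<lambda>(h, n, i). ereal (interv_disc (Zh h) \<Gamma> K T (N h) (M h) (dx h) n
                  (\<lambda>j. u h (tgrid T (N h) n) (xgrid (M h) (dx h) j)) i))"
  have fval: "f (h, n, i) = ereal (Sup (val h n i ` Zh h (sg h n) (yg h i)))" for h n i
    by (simp add: f_def interv_disc_def Let_def val_def sg_def yg_def UU_def)
  have C0: "C > 0"
  proof -
    have "0 < T / real (N 1)" using T_pos N_pos[of 1] by simp
    also have "\<dots> \<le> C * 1" using dt_le[of 1] by simp
    finally show ?thesis by simp
  qed
  have sg_range: "sg h n \<in> {0..T}" if "0 < h" "n \<le> N h" for h n
    unfolding sg_def using tgrid_range[OF T_pos that(2) N_pos[OF that(1)]] .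
  have Gev: "eventually (\<lambda>(h, n, i). Q h \<and> 0 < h \<and> n \<le> N h \<and> i \<le> M h \<and>
            dist (sg h n, yg h i) (t, x) < \<rho>) G" if "eventually Q (at_right 0)" "\<rho> > 0" for Q \<rho>
    using G_ev[OF that, where T=T and N=N and M=M and dx=dx and t=t and x=x] unfolding G_def sg_def yg_def .
  have Gnb: "G \<noteq> bot" unfolding G_def
    by (rule G_nontriv[OF T_pos N_pos dx_pos dt_le dx_le M_dx tx])
  have loc: "\<exists>r>0. \<exists>Qz \<rho>z. eventually Qz (at_right 0) \<and> \<rho>z > 0 \<and>
      (\<forall>h n i z'. Qz h \<longrightarrow> 0 < h \<longrightarrow> n \<le> N h \<longrightarrow> i \<le> M h \<longrightarrow> dist (sg h n, yg h i) (t, x) < \<rho>z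
        \<longrightarrow> dist z' z < r \<longrightarrow>
        \<bar>K (sg h n) (yg h i) z' - K t x z\<bar> < eps \<and>
        (\<exists>j\<le>M h. dist (sg h n, xgrid (M h) (dx h) j) (t, \<Gamma> t x z) < \<rho> \<and>
             interp (xgrid (M h) (dx h)) (M h) (UU h n) (\<Gamma> (sg h n) (yg h i) z') \<le> UU h n j) \<and>
        (\<exists>j\<le>M h. dist (sg h n, xgrid (M h) (dx h) j) (t, \<Gamma> t x z) < \<rho> \<and>
             UU h n j \<le> interp (xgrid (M h) (dx h)) (M h) (UU h n) (\<Gamma> (sg h n) (yg h i) z')))"
    if \<rho>: "\<rho> > 0" and eps: "eps > 0" for z \<rho> eps
  proof -
    have pD: "(t, x, z) \<in> {0..T} \<times> UNIV \<times> UNIV" using tx by simp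
    obtain d1 where d1: "d1 > 0" "\<forall>p'\<in>{0..T} \<times> UNIV \<times> UNIV. dist p' (t, x, z) < d1 \<longrightarrow>
        dist ((\<lambda>(t, x, z). \<Gamma> t x z) p') (\<Gamma> t x z) < \<rho> / 2"
      using \<Gamma>_cont[unfolded continuous_on_iff] pD \<rho> by (metis (no_types, lifting) case_prod_conv half_gt_zero)
    obtain d2 where d2: "d2 > 0" "\<forall>p'\<in>{0..T} \<times> UNIV \<times> UNIV. dist p' (t, x, z) < d2 \<longrightarrow>
        dist ((\<lambda>(t, x, z). K t x z) p') (K t x z) < eps"
      using K_cont[unfolded continuous_on_iff] pD eps by (metis (no_types, lifting) case_prod_conv)
    define r where "r = min d1 d2 / 3"
    have r0: "r > 0" using d1 d2 by (simp add: r_def)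
    define Qz where "Qz h = (h < \<rho> / (4 * C) \<and> 2 * (\<bar>\<Gamma> t x z\<bar> + \<rho>) \<le> real (M h) * dx h)" for h
    have evQz: "eventually Qz (at_right 0)"
    proof -
      have "eventually (\<lambda>h. h < \<rho> / (4 * C)) (at_right (0::real))"
        unfolding eventually_at_right_field using \<rho> C0 by (intro exI[of _ "\<rho> / (4 * C)"]) auto
      moreover have "eventually (\<lambda>h. 2 * (\<bar>\<Gamma> t x z\<bar> + \<rho>) \<le> real (M h) * dx h) (at_right (0::real))"
        using M_dx unfolding filterlim_at_top by blast
      ultimately show ?thesis unfolding Qz_def by (rule eventually_conj)
    qed
    have main: "\<bar>K (sg h n) (yg h i) z' - K t x z\<bar> < eps \<and>
        (\<exists>j\<le>M h. dist (sg h n, xgrid (M h) (dx h) j) (t, \<Gamma> t x z) < \<rho> \<and>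
             interp (xgrid (M h) (dx h)) (M h) (UU h n) (\<Gamma> (sg h n) (yg h i) z') \<le> UU h n j) \<and>
        (\<exists>j\<le>M h. dist (sg h n, xgrid (M h) (dx h) j) (t, \<Gamma> t x z) < \<rho> \<and>
             UU h n j \<le> interp (xgrid (M h) (dx h)) (M h) (UU h n) (\<Gamma> (sg h n) (yg h i) z'))"
      if Qh: "Qz h" and h: "0 < h" and n: "n \<le> N h" and i: "i \<le> M h"
        and d: "dist (sg h n, yg h i) (t, x) < min r (\<rho> / 4)" and z': "dist z' z < r" for h n i z'
    proof -
      let ?s = "sg h n" and ?y = "yg h i"
      have s: "?s \<in> {0..T}" using sg_range[OF h n] .
      have ds: "dist ?s t < min r (\<rho> / 4)" using d dist_pair_comp(1)[where a="?s" and b="?y" and c=t and d=x] by linarith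
      have dy: "dist ?y x < r" using d dist_pair_comp(2)[where a="?s" and b="?y" and c=t and d=x] by linarith
      have "dist (?s, ?y, z') (t, x, z) \<le> dist ?s t + dist (?y, z') (x, z)" by (rule dist_pair_le)
      also have "\<dots> \<le> dist ?s t + (dist ?y x + dist z' z)" using dist_pair_le[of ?y z' x z] by simp
      also have "\<dots> < 3 * r" using ds dy z' by linarith
      finally have dp: "dist (?s, ?y, z') (t, x, z) < 3 * r" .
      have pD': "(?s, ?y, z') \<in> {0..T} \<times> UNIV \<times> UNIV" using s by simp
      have G1: "\<bar>\<Gamma> ?s ?y z' - \<Gamma> t x z\<bar> < \<rho> / 2"
        using d1(2) pD' dp unfolding r_def by (auto simp: dist_real_def)
      have K1: "\<bar>K ?s ?y z' - K t x z\<bar> < eps"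
        using d2(2) pD' dp unfolding r_def by (auto simp: dist_real_def)
      have dxp: "0 < dx h" using dx_pos[OF h] .
      have dxs: "dx h < \<rho> / 4"
      proof -
        have "dx h \<le> C * h" using dx_le[OF h] .
        also have "\<dots> < C * (\<rho> / (4 * C))" using Qh C0 unfolding Qz_def by (intro mult_strict_left_mono) auto
        also have "\<dots> = \<rho> / 4" using C0 by simp
        finally show ?thesis .
      qed
      have gam: "\<bar>\<Gamma> ?s ?y z'\<bar> < real (M h) * dx h / 2" using G1 Qh[unfolded Qz_def, THEN conjunct2] \<rho> abs_triangle_ineq[of "\<Gamma> ?s ?y z' - \<Gamma> t x z" "\<Gamma> t x z"] by simp
      have close: "dist (?s, xgrid (M h) (dx h) j) (t, \<Gamma> t x z) < \<rho>"
        if j: "\<bar>xgrid (M h) (dx h) j - \<Gamma> ?s ?y z'\<bar> \<le> dx h" for j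
      proof -
        have "dist (?s, xgrid (M h) (dx h) j) (t, \<Gamma> t x z) \<le> dist ?s t + dist (xgrid (M h) (dx h) j) (\<Gamma> t x z)"
          by (rule dist_pair_le)
        also have "\<dots> < \<rho>" using ds j G1 dxs abs_triangle_ineq[of "xgrid (M h) (dx h) j - \<Gamma> ?s ?y z'" "\<Gamma> ?s ?y z' - \<Gamma> t x z"]
          by (simp add: dist_real_def)
        finally show ?thesis .
      qed
      note ib = interp_bounds[OF dxp gam, of "UU h n"]
      show "\<bar>K ?s ?y z' - K t x z\<bar> < eps \<and>
        (\<exists>j\<le>M h. dist (?s, xgrid (M h) (dx h) j) (t, \<Gamma> t x z) < \<rho> \<and>
             interp (xgrid (M h) (dx h)) (M h) (UU h n) (\<Gamma> ?s ?y z') \<le> UU h n j) \<and>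
        (\<exists>j\<le>M h. dist (?s, xgrid (M h) (dx h) j) (t, \<Gamma> t x z) < \<rho> \<and>
             UU h n j \<le> interp (xgrid (M h) (dx h)) (M h) (UU h n) (\<Gamma> ?s ?y z'))"
        using K1 ib close by blast
    qed
    show ?thesis using r0 evQz \<rho> main
      by (intro exI[of _ r] conjI exI[of _ Qz] exI[of _ "min r (\<rho> / 4)"]) auto
  qed
  have upper: "Limsup G f \<le> interv Z \<Gamma> K (upper_hr T u) t x"
  proof (rule dense_ge)
    fix c assume c: "interv Z \<Gamma> K (upper_hr T u) t x < c"
    show "Limsup G f \<le> c"
    proof (cases c)
      case PInf then show ?thesis by simp
    next
      case MInf then show ?thesis using c by simp
    next
      case (real c')
      define P where "P = (\<lambda>(h::real, n::nat, i::nat) z'. val h n i z' \<le> c')"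
      have locz: "\<exists>r>0. eventually (\<lambda>w. \<forall>z'. dist z' z < r \<longrightarrow> P w z') G" if z: "z \<in> Z t x" for z
      proof -
        have "upper_hr T u t (\<Gamma> t x z) + ereal (K t x z) \<le> interv Z \<Gamma> K (upper_hr T u) t x"
          unfolding interv_def using z by (rule SUP_upper)
        then have "upper_hr T u t (\<Gamma> t x z) + ereal (K t x z) < ereal c'" using c real by simp
        then have "upper_hr T u t (\<Gamma> t x z) < ereal (c' - K t x z)"
          by (cases "upper_hr T u t (\<Gamma> t x z)") auto
        then obtain a where a: "upper_hr T u t (\<Gamma> t x z) < ereal a" "ereal a < ereal (c' - K t x z)"
          using ereal_dense2 by blast
        have "eventually (\<lambda>w. (\<lambda>(h, s, y). ereal (u h s y)) w < ereal a) (hr_filter T t (\<Gamma> t x z))"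
          using Limsup_lessD[OF a(1)[unfolded upper_hr_def]] .
        from hr_ev[OF this] obtain h0 \<rho> where h0: "h0 > 0" "\<rho> > 0"
          "\<And>h s y. 0 < h \<Longrightarrow> h < h0 \<Longrightarrow> s \<in> {0..T} \<Longrightarrow> dist (s, y) (t, \<Gamma> t x z) < \<rho> \<Longrightarrow> u h s y < a"
          by auto
        have eps: "c' - a - K t x z > 0" using a(2) by simp
        obtain r Qz \<rho>z where L: "r > 0" "eventually Qz (at_right 0)" "\<rho>z > 0"
          "\<forall>h n i z'. Qz h \<longrightarrow> 0 < h \<longrightarrow> n \<le> N h \<longrightarrow> i \<le> M h \<longrightarrow> dist (sg h n, yg h i) (t, x) < \<rho>z
        \<longrightarrow> dist z' z < r \<longrightarrow>
        \<bar>K (sg h n) (yg h i) z' - K t x z\<bar> < c' - a - K t x z \<and>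
        (\<exists>j\<le>M h. dist (sg h n, xgrid (M h) (dx h) j) (t, \<Gamma> t x z) < \<rho> \<and>
             interp (xgrid (M h) (dx h)) (M h) (UU h n) (\<Gamma> (sg h n) (yg h i) z') \<le> UU h n j) \<and>
        (\<exists>j\<le>M h. dist (sg h n, xgrid (M h) (dx h) j) (t, \<Gamma> t x z) < \<rho> \<and>
             UU h n j \<le> interp (xgrid (M h) (dx h)) (M h) (UU h n) (\<Gamma> (sg h n) (yg h i) z'))"
          using loc[OF h0(2) eps, of z] by blast
        have evQ: "eventually (\<lambda>h. Qz h \<and> h < h0) (at_right 0)"
          using L(2) eventually_at_right_field[of "\<lambda>h. h < h0" 0] h0(1)
          by (auto intro: eventually_conj)
        have "eventually (\<lambda>w. \<forall>z'. dist z' z < r \<longrightarrow> P w z') G"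
        proof (rule eventually_mono[OF Gev[OF evQ L(3)]])
          fix w :: "real \<times> nat \<times> nat"
          assume H: "(\<lambda>(h, n, i). (Qz h \<and> h < h0) \<and> 0 < h \<and> n \<le> N h \<and> i \<le> M h \<and>
            dist (sg h n, yg h i) (t, x) < \<rho>z) w"
          obtain h n i where w: "w = (h, n, i)" by (cases w)
          from H w have Hh: "Qz h" "h < h0" "0 < h" "n \<le> N h" "i \<le> M h" "dist (sg h n, yg h i) (t, x) < \<rho>z"
            by auto
          show "\<forall>z'. dist z' z < r \<longrightarrow> P w z'"
          proof (intro allI impI)
            fix z' assume z': "dist z' z < r"
            from L(4) Hh z' obtain j where j: "j \<le> M h"
              "dist (sg h n, xgrid (M h) (dx h) j) (t, \<Gamma> t x z) < \<rho>"
              "interp (xgrid (M h) (dx h)) (M h) (UU h n) (\<Gamma> (sg h n) (yg h i) z') \<le> UU h n j"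
              and Kb: "\<bar>K (sg h n) (yg h i) z' - K t x z\<bar> < c' - a - K t x z"
              by blast
            have "UU h n j < a" unfolding UU_def
              using h0(3)[OF Hh(3) Hh(2) sg_range[OF Hh(3) Hh(4)] j(2)] .
            then show "P w z'" using j(3) Kb unfolding P_def w val_def by (simp add: abs_less_iff)
          qed
        qed
        then show ?thesis using L(1) by blast
      qed
      obtain e where e: "e > 0" "eventually (\<lambda>w. \<forall>z'. (\<exists>z\<in>Z t x. dist z' z < e) \<longrightarrow> P w z') G"
        using compact_ev[OF Z_compact[OF tx] locz] by blast
      obtain Q1 d1 where Q1: "eventually Q1 (at_right 0)" "d1 > 0"
        "\<forall>h s y. Q1 h \<longrightarrow> 0 < h \<longrightarrow> s \<in> {0..T} \<longrightarrow> dist (s, y) (t, x) < d1 \<longrightarrow>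
          (\<forall>z'\<in>Zh h s y. \<exists>w\<in>Z t x. dist z' w < e) \<and> (\<forall>z\<in>Z t x. \<exists>z'\<in>Zh h s y. dist z' z < e)"
        using H12[OF Z_ne Z_compact Zh_fin Zh_ne Zh_sub Zh_conv Zh_cont tx e(1), of x] by blast
      have "eventually (\<lambda>w. f w \<le> c) G"
      proof (rule eventually_mono[OF eventually_conj[OF Gev[OF Q1(1) Q1(2)] e(2)]])
        fix w :: "real \<times> nat \<times> nat"
        assume H: "(\<lambda>(h, n, i). Q1 h \<and> 0 < h \<and> n \<le> N h \<and> i \<le> M h \<and>
            dist (sg h n, yg h i) (t, x) < d1) w \<and> (\<forall>z'. (\<exists>z\<in>Z t x. dist z' z < e) \<longrightarrow> P w z')"
        obtain h n i where w: "w = (h, n, i)" by (cases w)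
        from H w have Hh: "Q1 h" "0 < h" "n \<le> N h" "i \<le> M h" "dist (sg h n, yg h i) (t, x) < d1"
          and HP: "\<And>z'. (\<exists>z\<in>Z t x. dist z' z < e) \<Longrightarrow> val h n i z' \<le> c'"
          by (auto simp: P_def)
        have s: "sg h n \<in> {0..T}" using sg_range[OF Hh(2) Hh(3)] .
        have near: "\<forall>z'\<in>Zh h (sg h n) (yg h i). \<exists>w\<in>Z t x. dist z' w < e"
          using Q1(3) Hh s by blast
        have "Sup (val h n i ` Zh h (sg h n) (yg h i)) \<le> c'"
          using Zh_ne[OF Hh(2) s] near HP by (intro cSUP_least) auto
        then show "f w \<le> c" unfolding w fval real by simp
      qed
      then show ?thesis by (rule Limsup_bounded)
    qed
  qed
  have lower: "interv Z \<Gamma> K (lower_hr T u) t x \<le> Liminf G f"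
  proof (rule dense_le)
    fix c assume c: "c < interv Z \<Gamma> K (lower_hr T u) t x"
    show "c \<le> Liminf G f"
    proof (cases c)
      case PInf then show ?thesis using c by simp
    next
      case MInf then show ?thesis by simp
    next
      case (real c')
      obtain z where z: "z \<in> Z t x" "ereal c' < lower_hr T u t (\<Gamma> t x z) + ereal (K t x z)"
        using c real unfolding interv_def by (auto simp: less_SUP_iff)
      then have "ereal (c' - K t x z) < lower_hr T u t (\<Gamma> t x z)"
        by (cases "lower_hr T u t (\<Gamma> t x z)") auto
      then obtain a where a: "ereal (c' - K t x z) < ereal a" "ereal a < lower_hr T u t (\<Gamma> t x z)"
        using ereal_dense2 by blast
      have "eventually (\<lambda>w. ereal a < (\<lambda>(h, s, y). ereal (u h s y)) w) (hr_filter T t (\<Gamma> t x z))"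
        using less_LiminfD[OF a(2)[unfolded lower_hr_def]] .
      from hr_ev[OF this] obtain h0 \<rho> where h0: "h0 > 0" "\<rho> > 0"
        "\<And>h s y. 0 < h \<Longrightarrow> h < h0 \<Longrightarrow> s \<in> {0..T} \<Longrightarrow> dist (s, y) (t, \<Gamma> t x z) < \<rho> \<Longrightarrow> a < u h s y"
        by auto
      have eps: "a + K t x z - c' > 0" using a(1) by simp
      obtain r Qz \<rho>z where L: "r > 0" "eventually Qz (at_right 0)" "\<rho>z > 0"
        "\<forall>h n i z'. Qz h \<longrightarrow> 0 < h \<longrightarrow> n \<le> N h \<longrightarrow> i \<le> M h \<longrightarrow> dist (sg h n, yg h i) (t, x) < \<rho>z
        \<longrightarrow> dist z' z < r \<longrightarrow>
        \<bar>K (sg h n) (yg h i) z' - K t x z\<bar> < a + K t x z - c' \<and>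
        (\<exists>j\<le>M h. dist (sg h n, xgrid (M h) (dx h) j) (t, \<Gamma> t x z) < \<rho> \<and>
             interp (xgrid (M h) (dx h)) (M h) (UU h n) (\<Gamma> (sg h n) (yg h i) z') \<le> UU h n j) \<and>
        (\<exists>j\<le>M h. dist (sg h n, xgrid (M h) (dx h) j) (t, \<Gamma> t x z) < \<rho> \<and>
             UU h n j \<le> interp (xgrid (M h) (dx h)) (M h) (UU h n) (\<Gamma> (sg h n) (yg h i) z'))"
        using loc[OF h0(2) eps, of z] by blast
      obtain Q1 d1 where Q1: "eventually Q1 (at_right 0)" "d1 > 0"
        "\<forall>h s y. Q1 h \<longrightarrow> 0 < h \<longrightarrow> s \<in> {0..T} \<longrightarrow> dist (s, y) (t, x) < d1 \<longrightarrow>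
          (\<forall>z'\<in>Zh h s y. \<exists>w\<in>Z t x. dist z' w < r) \<and> (\<forall>z\<in>Z t x. \<exists>z'\<in>Zh h s y. dist z' z < r)"
        using H12[OF Z_ne Z_compact Zh_fin Zh_ne Zh_sub Zh_conv Zh_cont tx L(1), of x] by blast
      have evQ: "eventually (\<lambda>h. (Qz h \<and> Q1 h) \<and> h < h0) (at_right 0)"
        using L(2) Q1(1) eventually_at_right_field[of "\<lambda>h. h < h0" 0] h0(1)
        by (auto intro: eventually_conj)
      have d0: "min \<rho>z d1 > 0" using L(3) Q1(2) by simp
      have "eventually (\<lambda>w. c \<le> f w) G"
      proof (rule eventually_mono[OF Gev[OF evQ d0]])
        fix w :: "real \<times> nat \<times> nat"
        assume H: "(\<lambda>(h, n, i). ((Qz h \<and> Q1 h) \<and> h < h0) \<and> 0 < h \<and> n \<le> N h \<and> i \<le> M h \<and>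
            dist (sg h n, yg h i) (t, x) < min \<rho>z d1) w"
        obtain h n i where w: "w = (h, n, i)" by (cases w)
        from H w have Hh: "Qz h" "Q1 h" "h < h0" "0 < h" "n \<le> N h" "i \<le> M h"
          "dist (sg h n, yg h i) (t, x) < \<rho>z" "dist (sg h n, yg h i) (t, x) < d1"
          by auto
        have s: "sg h n \<in> {0..T}" using sg_range[OF Hh(4) Hh(5)] .
        obtain z' where z': "z' \<in> Zh h (sg h n) (yg h i)" "dist z' z < r"
          using Q1(3) Hh s z(1) by blast
        from L(4) Hh z'(2) obtain j where j: "j \<le> M h"
          "dist (sg h n, xgrid (M h) (dx h) j) (t, \<Gamma> t x z) < \<rho>"
          "UU h n j \<le> interp (xgrid (M h) (dx h)) (M h) (UU h n) (\<Gamma> (sg h n) (yg h i) z')"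
          and Kb: "\<bar>K (sg h n) (yg h i) z' - K t x z\<bar> < a + K t x z - c'"
          by blast
        have "a < UU h n j" unfolding UU_def
          using h0(3)[OF Hh(4) Hh(3) s j(2)] .
        then have v: "c' \<le> val h n i z'" using j(3) Kb unfolding val_def by (simp add: abs_less_iff)
        have "val h n i z' \<le> Sup (val h n i ` Zh h (sg h n) (yg h i))"
          using Zh_fin[OF Hh(4) s] z'(1) by (intro cSUP_upper) auto
        then show "c \<le> f w" using v unfolding w fval real by simp
      qed
      then show ?thesis by (rule Liminf_bounded)
    qed
  qed
  have "Liminf G f \<le> Limsup G f" using Gnb by (intro Liminf_le_Limsup) simp
  then show ?thesis using lower upper unfolding G_def f_def by blast
qed


end
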